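(* Let $P$ be a distribution on $\mathcal X\times\{-1,+1\}$ with $\mathcal X\subseteq\mathbb R^d$, let $R>0$, $\mathscr W=\{\mathbf w\in\mathbb R^d:\|\mathbf w\|\le R\}$, and let $\ell:\mathbb R\to\mathbb R_+$ be a convex differentiable loss, with $\mathbf w_*\in\arg\min_{\mathbf w\in\mathscr W}\mathrm E[\ell(y\mathbf w^\top\mathbf x)]$. Suppose (i) there is $q>0$ with $\Pr(y=1\mid\mathbf x)\ge q$ and $\Pr(y=-1\mid\mathbf x)\ge q$ for every $\mathbf x\in\mathcal X$, and (ii) $\ell'(0)>0$. Then Assumption (I) and Assumption (II) hold with a constant $\theta\ge q[\ell'(0)]^2$.
   Context: Assumption (I): there is $\theta>0$ with $\mathrm E[(\ell'(y\mathbf w_*^\top\mathbf x))^2\mathbf x\mathbf x^\top]\succeq\theta\,\mathrm E[\mathbf x\mathbf x^\top]$. Assumption (II): there is $\theta>0$ with $\mathrm E[(\ell'(y\mathbf w^\top\mathbf x))^2\mathbf x\mathbf x^\top]\succeq\theta\,\mathrm E[\mathbf x\mathbf x^\top]$ for all $\mathbf w\in\mathscr W$. Expectations are over $(\mathbf x,y)\sim P$; $\succeq$ is the Loewner order. *)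

theory Defs
  imports "HOL-Probability.Probability"
begin

definition outer :: "real^'d \<Rightarrow> real^'d^'d" where
  "outer x = (\<chi> i j. x $ i * x $ j)"

definition loewner_ge :: "real^'d^'d \<Rightarrow> real^'d^'d \<Rightarrow> bool" where
  "loewner_ge A B \<longleftrightarrow> (\<forall>v. v \<bullet> ((A - B) *v v) \<ge> 0)"

end

theory Submission
  imports Defs
begin


lemma sets_times_single:
  fixes A :: "(real^('d::finite)) set" and c :: real
  assumes "A \<in> sets borel"
  shows "A \<times> {c} \<in> sets (borel :: ((real^'d) \<times> real) measure)"
proof -
  have "A \<times> {c} \<in> sets (borel \<Otimes>\<^sub>M (borel :: real measure))"
    using assms by (intro pair_measureI) auto
  thus ?thesis by (metis borel_prod)
qed

lemma fst_borel: "(fst :: (real^('d::finite)) \<times> real \<Rightarrow> _) \<in> measurable borel borel"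
  by (metis borel_prod measurable_fst)

lemma snd_borel: "(snd :: (real^('d::finite)) \<times> real \<Rightarrow> _) \<in> measurable borel borel"
  by (metis borel_prod measurable_snd)

lemma key:
  fixes P :: "((real^('d::finite)) \<times> real) measure"
    and X :: "(real^'d) set" and q :: real and \<eta> :: "real^'d \<Rightarrow> real"
    and f :: "real^'d \<Rightarrow> ennreal"
  assumes P_prob: "prob_space P"
    and P_sets: "sets P = sets borel"
    and P_supp: "AE z in P. fst z \<in> X \<and> snd z \<in> {-1, 1}"
    and eta_meas: "\<eta> \<in> borel_measurable borel"
    and eta_cond: "\<And>A. A \<in> sets borel \<Longrightarrow>
        measure P (A \<times> {1}) = (\<integral>x. indicator A x * \<eta> x \<partial>(distr P borel fst))"
    and cond_pos: "\<And>x. x \<in> X \<Longrightarrow> \<eta> x \<ge> q"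
    and cond_neg: "\<And>x. x \<in> X \<Longrightarrow> 1 - \<eta> x \<ge> q"
    and q_pos: "q > 0"
    and c: "c \<in> {-1, 1}"
    and f_meas: "f \<in> borel_measurable borel"
  shows "ennreal q * (\<integral>\<^sup>+ z. f (fst z) \<partial>P) \<le> (\<integral>\<^sup>+ z. indicator {z. snd z = c} z * f (fst z) \<partial>P)"
proof -
  interpret prob_space P by fact
  have spP: "space P = UNIV" using sets_eq_imp_space_eq[OF P_sets] by simp
  have meas_cong: "measurable P = measurable borel" by (rule measurable_cong_sets[OF P_sets refl, THEN ext])
  have fst_meas: "fst \<in> measurable P borel" unfolding meas_cong by (rule fst_borel)
  have snd_meas: "snd \<in> measurable P borel" unfolding meas_cong by (rule snd_borel)
  define Px where "Px = distr P borel fst"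
  interpret Px: prob_space Px unfolding Px_def by (rule prob_space_distr[OF fst_meas])
  have sPx: "sets Px = sets borel" unfolding Px_def by simp
  have spPx: "space Px = UNIV" unfolding Px_def by simp
  have AEeta: "AE x in Px. q \<le> \<eta> x \<and> q \<le> 1 - \<eta> x"
    unfolding Px_def
  proof (subst AE_distr_iff[OF fst_meas])
    show "{x \<in> space borel. q \<le> \<eta> x \<and> q \<le> 1 - \<eta> x} \<in> sets borel" using eta_meas by measurable
    show "AE x in P. q \<le> \<eta> (fst x) \<and> q \<le> 1 - \<eta> (fst x)"
      using P_supp by eventually_elim (use cond_pos cond_neg in auto)
  qed
  have int_eta: "integrable Px (\<lambda>x. indicator A x * \<eta> x)" if "A \<in> sets borel" for A
  proof (rule Px.integrable_const_bound[where B=1])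
    show "AE x in Px. norm (indicator A x * \<eta> x) \<le> 1"
      using AEeta by eventually_elim (use q_pos in \<open>auto simp: indicator_def\<close>)
    show "(\<lambda>x. indicator A x * \<eta> x) \<in> borel_measurable Px"
      using that eta_meas unfolding measurable_cong_sets[OF sPx refl] by measurable
  qed
  have sets_c: "A \<times> {c'} \<in> sets P" if "A \<in> sets borel" for A c'
    using sets_times_single[OF that] P_sets by simp
  have lowb: "q * measure Px A \<le> measure P (A \<times> {c})" if A: "A \<in> sets borel" for A
  proof -
    have int_k: "integrable Px (\<lambda>x. indicator A x * k)" for k :: real
    proof (rule Px.integrable_const_bound[where B="\<bar>k\<bar>"])
      show "AE x in Px. norm (indicator A x * k) \<le> \<bar>k\<bar>" by (auto simp: indicator_def)
      show "(\<lambda>x. indicator A x * k) \<in> borel_measurable Px"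
        using A unfolding measurable_cong_sets[OF sPx refl] by measurable
    qed
    have a1: "AE x in Px. indicator A x * q \<le> indicator A x * \<eta> x"
      using AEeta by eventually_elim (auto simp: indicator_def)
    have a2: "AE x in Px. indicator A x * \<eta> x \<le> indicator A x * (1-q)"
      using AEeta by eventually_elim (auto simp: indicator_def)
    have i1: "(\<integral>x. indicator A x * \<eta> x \<partial>Px) \<ge> (\<integral>x. indicator A x * q \<partial>Px)"
      by (rule integral_mono_AE[OF int_k int_eta[OF A] a1])
    have i2: "(\<integral>x. indicator A x * \<eta> x \<partial>Px) \<le> (\<integral>x. indicator A x * (1-q) \<partial>Px)"
      by (rule integral_mono_AE[OF int_eta[OF A] int_k a2])
    have e1: "(\<integral>x. indicator A x * q \<partial>Px) = q * measure Px A"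
      using A sPx by simp
    have e2: "(\<integral>x. indicator A x * (1-q) \<partial>Px) = (1-q) * measure Px A"
      using A sPx by simp
    have m1: "measure P (A \<times> {1}) = (\<integral>x. indicator A x * \<eta> x \<partial>Px)"
      using eta_cond[OF A] unfolding Px_def .
    show ?thesis
    proof (cases "c = 1")
      case True thus ?thesis using m1 i1 e1 by (simp only:)
    next
      case False
      hence cm: "c = -1" using c by auto
      have "measure Px A = measure P (fst -` A \<inter> space P)"
        unfolding Px_def using A by (simp add: measure_distr[OF fst_meas])
      also have "\<dots> = measure P (A \<times> {1} \<union> A \<times> {-1})"
      proof (rule finite_measure_eq_AE)
        show "AE x in P. (x \<in> fst -` A \<inter> space P) = (x \<in> A \<times> {1} \<union> A \<times> {- 1})"
          using P_supp by eventually_elim (auto simp: spP)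
        show "fst -` A \<inter> space P \<in> sets P" using A fst_meas by (simp add: measurable_sets)
        show "A \<times> {1} \<union> A \<times> {- 1} \<in> sets P" using sets_c[OF A] by auto
      qed
      also have "\<dots> = measure P (A \<times> {1}) + measure P (A \<times> {-1})"
        by (rule finite_measure_Union) (auto intro: sets_c[OF A])
      finally show ?thesis using m1 i2 e2 cm by (simp only:) (simp add: algebra_simps)
    qed
  qed
  define N where "N = distr (density P (indicator {z. snd z = c})) borel fst"
  define M' where "M' = density Px (\<lambda>_. ennreal q)"
  have ind_meas: "indicator {z. snd z = c} \<in> borel_measurable P"
  proof -
    have eq: "{z. snd z = c} = UNIV \<times> {c}" by auto
    have "UNIV \<times> {c} \<in> sets P" by (rule sets_c) simp
    hence "{z. snd z = c} \<in> sets P" by (simp only: eq)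
    thus ?thesis by simp
  qed
  have fst_meas': "fst \<in> measurable (density P (indicator {z. snd z = c})) borel"
    using fst_meas by simp
  have sN: "sets N = sets borel" unfolding N_def by simp
  have sM: "sets M' = sets borel" unfolding M'_def using sPx by simp
  have le: "M' \<le> N"
  proof -
    have "emeasure M' A \<le> emeasure N A" for A
    proof (cases "A \<in> sets borel")
      case False thus ?thesis using sN sM by (simp add: emeasure_notin_sets)
    next
      case A: True
      have "emeasure M' A = ennreal q * ennreal (measure Px A)"
        unfolding M'_def using A sPx by (simp add: emeasure_density_const Px.emeasure_eq_measure)
      also have "\<dots> = ennreal (q * measure Px A)" using q_pos by (simp add: ennreal_mult)
      also have "\<dots> \<le> ennreal (measure P (A \<times> {c}))" using lowb[OF A] by simp
      also have "\<dots> = emeasure P (A \<times> {c})" by (simp add: emeasure_eq_measure)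
      also have "\<dots> = emeasure N A"
      proof -
        have "emeasure N A = emeasure (density P (indicator {z. snd z = c})) (fst -` A \<inter> space P)"
          unfolding N_def using A by (simp add: emeasure_distr[OF fst_meas'])
        also have "\<dots> = (\<integral>\<^sup>+ x. indicator {z. snd z = c} x * indicator (fst -` A \<inter> space P) x \<partial>P)"
          using A fst_meas by (intro emeasure_density ind_meas) (simp add: measurable_sets)
        also have "\<dots> = (\<integral>\<^sup>+ x. indicator (A \<times> {c}) x \<partial>P)"
          by (intro nn_integral_cong) (auto simp: indicator_def spP)
        also have "\<dots> = emeasure P (A \<times> {c})" using sets_c[OF A] by simp
        finally show ?thesis by simp
      qed
      finally show ?thesis .
    qed
    thus ?thesis using sN sM unfolding le_measure_iff
      by (simp add: le_fun_def sets_eq_imp_space_eq[OF sN] sets_eq_imp_space_eq[OF sM])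
  qed
  have "ennreal q * (\<integral>\<^sup>+ z. f (fst z) \<partial>P) = ennreal q * (\<integral>\<^sup>+ x. f x \<partial>Px)"
    unfolding Px_def using f_meas by (simp add: nn_integral_distr[OF fst_meas])
  also have "\<dots> = (\<integral>\<^sup>+ x. ennreal q * f x \<partial>Px)"
    using f_meas sPx by (simp add: nn_integral_cmult measurable_cong_sets[OF sPx refl])
  also have "\<dots> = integral\<^sup>N M' f"
    unfolding M'_def using f_meas sPx by (simp add: nn_integral_density measurable_cong_sets[OF sPx refl])
  also have "\<dots> \<le> integral\<^sup>N N f" using nn_integral_mono_measure[OF _ le] sN sM by simp
  also have "\<dots> = (\<integral>\<^sup>+ z. f (fst z) \<partial>density P (indicator {z. snd z = c}))"
    unfolding N_def using f_meas by (simp add: nn_integral_distr[OF fst_meas'])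
  also have "\<dots> = (\<integral>\<^sup>+ z. indicator {z. snd z = c} z * f (fst z) \<partial>P)"
    using f_meas fst_meas by (intro nn_integral_density ind_meas measurable_compose[OF fst_meas f_meas])
  finally show ?thesis .
qed



lemma deriv_mono_convex:
  fixes f :: "real \<Rightarrow> real"
  assumes cvx: "convex_on UNIV f" and d: "\<And>t. f differentiable (at t)" and st: "s \<le> t"
  shows "deriv f s \<le> deriv f t"
proof -
  have D: "(f has_field_derivative deriv f u) (at u within UNIV)" for u
    using d DERIV_deriv_iff_real_differentiable by auto
  have 1: "f t - f s \<ge> deriv f s * (t - s)"
    by (rule convex_on_imp_above_tangent[OF cvx]) (auto intro: D)
  have 2: "f s - f t \<ge> deriv f t * (s - t)"
    by (rule convex_on_imp_above_tangent[OF cvx]) (auto intro: D)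
  have "(deriv f t - deriv f s) * (t - s) \<ge> 0" using 1 2 by (simp add: algebra_simps)
  thus ?thesis using st by (cases "s = t") (auto simp: zero_le_mult_iff)
qed

lemma quad_outer: "v \<bullet> (outer x *v v) = (v \<bullet> x)\<^sup>2"
  for v x :: "real^'d::finite"
proof -
  have "outer x *v v = (v \<bullet> x) *\<^sub>R x"
    by (simp add: outer_def matrix_vector_mult_def vec_eq_iff inner_vec_def sum_distrib_left
        sum_distrib_right mult_ac)
  thus ?thesis by (simp add: power2_eq_square inner_commute)
qed

lemma quad_blin: "bounded_linear (\<lambda>M :: real^'d^'d. v \<bullet> (M *v v))"
  for v :: "real^'d::finite"
proof -
  have "linear (\<lambda>M :: real^'d^'d. v \<bullet> (M *v v))"
    by (rule linearI) (simp_all add: matrix_vector_mult_add_rdistrib inner_add_right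
        scaleR_matrix_vector_assoc[symmetric])
  thus ?thesis by (simp add: linear_conv_bounded_linear)
qed



lemma sq_bound:
  fixes f :: "real \<Rightarrow> real"
  assumes cvx: "convex_on UNIV f" and d: "\<And>t. f differentiable (at t)" and p: "deriv f 0 > 0"
  shows "(deriv f 0)\<^sup>2 \<le> (deriv f t)\<^sup>2 + (deriv f (-t))\<^sup>2"
proof (cases "t \<ge> 0")
  case True
  hence "deriv f 0 \<le> deriv f t" by (rule deriv_mono_convex[OF cvx d])
  hence "(deriv f 0)\<^sup>2 \<le> (deriv f t)\<^sup>2" using p by (intro power_mono) auto
  thus ?thesis by (simp add: add_increasing2)
next
  case False
  hence "deriv f 0 \<le> deriv f (-t)" by (intro deriv_mono_convex[OF cvx d]) auto
  hence "(deriv f 0)\<^sup>2 \<le> (deriv f (-t))\<^sup>2" using p by (intro power_mono) auto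
  thus ?thesis by (simp add: add_increasing)
qed

theorem lemma1:
  fixes P :: "((real^('d::finite)) \<times> real) measure"
    and X :: "(real^'d) set"
    and R q :: real
    and loss :: "real \<Rightarrow> real"
    and w_star :: "real^'d"
    and \<eta> :: "real^'d \<Rightarrow> real"
  assumes P_prob: "prob_space P"
    and P_sets: "sets P = sets borel"
    and P_supp: "AE z in P. fst z \<in> X \<and> snd z \<in> {-1, 1}"
    and R_pos: "R > 0"
    and loss_nonneg: "\<And>t. loss t \<ge> 0"
    and loss_convex: "convex_on UNIV loss"
    and loss_diff: "\<And>t. loss differentiable (at t)"
    and w_star_in: "norm w_star \<le> R"
    and w_star_min: "\<And>w. norm w \<le> R \<Longrightarrow>
        (\<integral>\<^sup>+ z. ennreal (loss (snd z * (w_star \<bullet> fst z))) \<partial>P)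
          \<le> (\<integral>\<^sup>+ z. ennreal (loss (snd z * (w \<bullet> fst z))) \<partial>P)"
    and eta_meas: "\<eta> \<in> borel_measurable borel"
    and eta_cond: "\<And>A. A \<in> sets borel \<Longrightarrow>
        measure P (A \<times> {1}) = (\<integral>x. indicator A x * \<eta> x \<partial>(distr P borel fst))"
    and q_pos: "q > 0"
    and cond_pos: "\<And>x. x \<in> X \<Longrightarrow> \<eta> x \<ge> q"
    and cond_neg: "\<And>x. x \<in> X \<Longrightarrow> 1 - \<eta> x \<ge> q"
    and deriv0_pos: "deriv loss 0 > 0"
    and int_xx: "integrable P (\<lambda>z. outer (fst z))"
    and int_grad: "\<And>w. norm w \<le> R \<Longrightarrow>
        integrable P (\<lambda>z. (deriv loss (snd z * (w \<bullet> fst z)))\<^sup>2 *\<^sub>R outer (fst z))"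
  shows "\<exists>\<theta>>0. \<theta> \<ge> q * (deriv loss 0)\<^sup>2
    \<and> loewner_ge
        (\<integral>z. (deriv loss (snd z * (w_star \<bullet> fst z)))\<^sup>2 *\<^sub>R outer (fst z) \<partial>P)
        (\<theta> *\<^sub>R (\<integral>z. outer (fst z) \<partial>P))
    \<and> (\<forall>w. norm w \<le> R \<longrightarrow> loewner_ge
        (\<integral>z. (deriv loss (snd z * (w \<bullet> fst z)))\<^sup>2 *\<^sub>R outer (fst z) \<partial>P)
        (\<theta> *\<^sub>R (\<integral>z. outer (fst z) \<partial>P)))"
proof -
  define d where "d = deriv loss"
  define \<theta> where "\<theta> = q * (d 0)\<^sup>2"
  have th_pos: "\<theta> > 0" unfolding \<theta>_def d_def using q_pos deriv0_pos by simp
  have d_meas: "d \<in> borel_measurable borel" unfolding d_def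
    by (rule borel_measurable_mono) (auto simp: mono_def intro: deriv_mono_convex[OF loss_convex loss_diff])
  have mc: "measurable P = measurable (borel \<Otimes>\<^sub>M borel)"
  proof -
    have "sets P = sets (borel \<Otimes>\<^sub>M (borel :: real measure) :: ((real^'d) \<times> real) measure)"
      unfolding borel_prod by (rule P_sets)
    thus ?thesis by (intro ext measurable_cong_sets) simp_all
  qed
  have main: "loewner_ge
        (\<integral>z. (d (snd z * (w \<bullet> fst z)))\<^sup>2 *\<^sub>R outer (fst z) \<partial>P)
        (\<theta> *\<^sub>R (\<integral>z. outer (fst z) \<partial>P))" if w: "norm w \<le> R" for w
    unfolding loewner_ge_def
  proof
    fix v :: "real^'d"
    define G where "G z = (d (snd z * (w \<bullet> fst z)))\<^sup>2 * (v \<bullet> fst z)\<^sup>2" for z :: "(real^'d) \<times> real"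
    define H where "H z = (v \<bullet> fst z)\<^sup>2" for z :: "(real^'d) \<times> real"
    have bl: "bounded_linear (\<lambda>M :: real^'d^'d. v \<bullet> (M *v v))" by (rule quad_blin)
    have Lsc: "v \<bullet> ((s *\<^sub>R M) *v v) = s * (v \<bullet> (M *v v))" for s and M :: "real^'d^'d"
      by (simp add: scaleR_matrix_vector_assoc[symmetric])
    have intg: "integrable P (\<lambda>z. (d (snd z * (w \<bullet> fst z)))\<^sup>2 *\<^sub>R outer (fst z))"
      using int_grad[OF w] unfolding d_def .
    have LA: "v \<bullet> ((\<integral>z. (d (snd z * (w \<bullet> fst z)))\<^sup>2 *\<^sub>R outer (fst z) \<partial>P) *v v) = (\<integral>z. G z \<partial>P)"
      using integral_bounded_linear[OF bl intg, symmetric]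
      by (simp add: G_def Lsc quad_outer)
    have LB: "v \<bullet> ((\<integral>z. outer (fst z) \<partial>P) *v v) = (\<integral>z. H z \<partial>P)"
      using integral_bounded_linear[OF bl int_xx, symmetric]
      by (simp add: H_def quad_outer)
    have intG: "integrable P G" unfolding G_def[abs_def]
      using integrable_bounded_linear[OF bl intg] by (simp add: G_def Lsc quad_outer)
    have intH: "integrable P H" unfolding H_def[abs_def]
      using integrable_bounded_linear[OF bl int_xx] by (simp add: H_def quad_outer)
    have G0: "\<And>z. G z \<ge> 0" and H0: "\<And>z. H z \<ge> 0" by (simp_all add: G_def H_def)
    have GI0: "0 \<le> (\<integral>z. G z \<partial>P)" using G0 by (simp add: integral_nonneg_AE)
    have HI0: "0 \<le> (\<integral>z. H z \<partial>P)" using H0 by (simp add: integral_nonneg_AE)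
    define h1 where "h1 x = ennreal ((d (w \<bullet> x))\<^sup>2 * (v \<bullet> x)\<^sup>2)" for x :: "real^'d"
    define h2 where "h2 x = ennreal ((d (- (w \<bullet> x)))\<^sup>2 * (v \<bullet> x)\<^sup>2)" for x :: "real^'d"
    note d_meas[measurable]
    have h1m: "h1 \<in> borel_measurable borel" unfolding h1_def by measurable
    have h2m: "h2 \<in> borel_measurable borel" unfolding h2_def by measurable
    have kk: "ennreal q * (\<integral>\<^sup>+ z. f (fst z) \<partial>P) \<le> (\<integral>\<^sup>+ z. indicator {z. snd z = c} z * f (fst z) \<partial>P)"
      if "c \<in> {-1,1}" "f \<in> borel_measurable borel" for c and f :: "real^'d \<Rightarrow> ennreal"
      by (rule key[OF P_prob P_sets P_supp eta_meas eta_cond cond_pos cond_neg q_pos that])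
    have ind_m: "(\<lambda>z. indicator {z. snd z = c} z :: ennreal) \<in> borel_measurable P" for c :: real
    proof -
      have eq: "{z. snd z = c} = UNIV \<times> {c}" by auto
      have "UNIV \<times> {c} \<in> sets P" using sets_times_single[of UNIV c] P_sets by simp
      hence "{z. snd z = c} \<in> sets P" by (simp only: eq)
      thus ?thesis by (rule borel_measurable_indicator)
    qed
    have fm: "(\<lambda>z. f (fst z)) \<in> borel_measurable P" if "f \<in> borel_measurable borel" for f :: "real^'d \<Rightarrow> ennreal"
      using that unfolding mc by measurable
    have "(\<integral>\<^sup>+ z. ennreal (G z) \<partial>P) =
       (\<integral>\<^sup>+ z. indicator {z. snd z = 1} z * h1 (fst z) + indicator {z. snd z = -1} z * h2 (fst z) \<partial>P)"
      using P_supp by (intro nn_integral_cong_AE, eventually_elim) (auto simp: G_def h1_def h2_def)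
    also have "\<dots> = (\<integral>\<^sup>+ z. indicator {z. snd z = 1} z * h1 (fst z) \<partial>P) + (\<integral>\<^sup>+ z. indicator {z. snd z = -1} z * h2 (fst z) \<partial>P)"
      using ind_m fm h1m h2m by (intro nn_integral_add) auto
    also have S1: "\<dots> \<ge> ennreal q * (\<integral>\<^sup>+ z. h1 (fst z) \<partial>P) + ennreal q * (\<integral>\<^sup>+ z. h2 (fst z) \<partial>P)"
      by (intro add_mono kk h1m h2m) auto
    finally have S1': "(\<integral>\<^sup>+ z. ennreal (G z) \<partial>P) \<ge> ennreal q * (\<integral>\<^sup>+ z. h1 (fst z) \<partial>P) + ennreal q * (\<integral>\<^sup>+ z. h2 (fst z) \<partial>P)" .
    have S2: "ennreal q * (\<integral>\<^sup>+ z. h1 (fst z) \<partial>P) + ennreal q * (\<integral>\<^sup>+ z. h2 (fst z) \<partial>P)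
        = ennreal q * (\<integral>\<^sup>+ z. h1 (fst z) + h2 (fst z) \<partial>P)"
      using fm h1m h2m by (simp add: nn_integral_add distrib_left)
    have S3: "(\<integral>\<^sup>+ z. h1 (fst z) + h2 (fst z) \<partial>P) \<ge> (\<integral>\<^sup>+ z. ennreal ((d 0)\<^sup>2 * H z) \<partial>P)"
    proof (intro nn_integral_mono)
      fix z :: "(real^'d) \<times> real"
      have "(d 0)\<^sup>2 \<le> (d (w \<bullet> fst z))\<^sup>2 + (d (- (w \<bullet> fst z)))\<^sup>2"
        unfolding d_def by (rule sq_bound[OF loss_convex loss_diff deriv0_pos])
      hence "(d 0)\<^sup>2 * H z \<le> (d (w \<bullet> fst z))\<^sup>2 * (v \<bullet> fst z)\<^sup>2 + (d (- (w \<bullet> fst z)))\<^sup>2 * (v \<bullet> fst z)\<^sup>2"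
        using H0[of z] by (simp add: H_def distrib_right[symmetric] mult_right_mono)
      thus "ennreal ((d 0)\<^sup>2 * H z) \<le> h1 (fst z) + h2 (fst z)"
        by (simp add: h1_def h2_def ennreal_plus[symmetric] del: ennreal_plus)
    qed
    have S4: "(\<integral>\<^sup>+ z. ennreal ((d 0)\<^sup>2 * H z) \<partial>P) = ennreal ((d 0)\<^sup>2) * ennreal (\<integral>z. H z \<partial>P)"
    proof -
      have "(\<integral>\<^sup>+ z. ennreal ((d 0)\<^sup>2 * H z) \<partial>P) = (\<integral>\<^sup>+ z. ennreal ((d 0)\<^sup>2) * ennreal (H z) \<partial>P)"
        using H0 by (intro nn_integral_cong) (simp add: ennreal_mult)
      also have "\<dots> = ennreal ((d 0)\<^sup>2) * (\<integral>\<^sup>+ z. ennreal (H z) \<partial>P)"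
        using intH by (intro nn_integral_cmult) auto
      also have "(\<integral>\<^sup>+ z. ennreal (H z) \<partial>P) = ennreal (\<integral>z. H z \<partial>P)"
        using intH H0 by (intro nn_integral_eq_integral) auto
      finally show ?thesis .
    qed
    have "ennreal q * (ennreal ((d 0)\<^sup>2) * ennreal (\<integral>z. H z \<partial>P)) \<le> ennreal q * (\<integral>\<^sup>+ z. h1 (fst z) + h2 (fst z) \<partial>P)"
      unfolding S4[symmetric] by (rule mult_left_mono[OF S3]) simp
    also have "\<dots> \<le> (\<integral>\<^sup>+ z. ennreal (G z) \<partial>P)" using S1' S2 by simp
    finally have S5: "ennreal q * (ennreal ((d 0)\<^sup>2) * ennreal (\<integral>z. H z \<partial>P)) \<le> (\<integral>\<^sup>+ z. ennreal (G z) \<partial>P)" .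
    moreover have "(\<integral>\<^sup>+ z. ennreal (G z) \<partial>P) = ennreal (\<integral>z. G z \<partial>P)"
      using intG G0 by (intro nn_integral_eq_integral) auto
    moreover have "ennreal q * (ennreal ((d 0)\<^sup>2) * ennreal (\<integral>z. H z \<partial>P)) = ennreal (\<theta> * (\<integral>z. H z \<partial>P))"
      unfolding \<theta>_def using q_pos HI0
      by (simp add: ennreal_mult mult.assoc)
    ultimately have "\<theta> * (\<integral>z. H z \<partial>P) \<le> (\<integral>z. G z \<partial>P)"
      using GI0 by (simp add: ennreal_le_iff)
    thus "0 \<le> v \<bullet> (((\<integral>z. (d (snd z * (w \<bullet> fst z)))\<^sup>2 *\<^sub>R outer (fst z) \<partial>P) - \<theta> *\<^sub>R (\<integral>z. outer (fst z) \<partial>P)) *v v)"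
      using LA LB by (simp add: matrix_vector_mult_diff_rdistrib inner_diff_right Lsc)
  qed
  show ?thesis
    using th_pos main[OF w_star_in] main unfolding \<theta>_def d_def by auto
qed

end
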